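(* Let $I$ be an index set and $P_r,Q_r\in GL(n,\mathbb R)$ for $r\in I$. There exists a $C^1$-diffeomorphism (respectively, a real-analytic diffeomorphism with real-analytic inverse) $f\colon\mathbb R^n\to\mathbb R^n$ with $f(P_rx)=Q_rf(x)$ for all $x\in\mathbb R^n$, $r\in I$, if and only if there exists $C\in GL(n,\mathbb R)$ with $CP_r=Q_rC$ for all $r\in I$. *)

theory Defs
  imports "HOL-Analysis.Analysis"
begin

definition C1_map :: "(real^'n \<Rightarrow> real^'m) \<Rightarrow> bool" where
  "C1_map f \<longleftrightarrow> (\<exists>f' :: (real^'n) \<Rightarrow> ((real^'n) \<Rightarrow>\<^sub>L (real^'m)).
      (\<forall>x. (f has_derivative blinfun_apply (f' x)) (at x)) \<and> continuous_on UNIV f')"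

definition C1_diffeo :: "(real^'n \<Rightarrow> real^'n) \<Rightarrow> bool" where
  "C1_diffeo f \<longleftrightarrow> bij f \<and> C1_map f \<and> C1_map (inv f)"

definition monomial_at :: "real^'n \<Rightarrow> ('n \<Rightarrow> nat) \<Rightarrow> real^'n \<Rightarrow> real" where
  "monomial_at x0 al y = prod (\<lambda>i. (y$i - x0$i) ^ (al i)) UNIV"

definition real_analytic_at :: "(real^'n \<Rightarrow> real^'m) \<Rightarrow> real^'n \<Rightarrow> bool" where
  "real_analytic_at f x0 \<longleftrightarrow> (\<exists>r>0. \<exists>a :: ('n \<Rightarrow> nat) \<Rightarrow> real^'m.
      \<forall>y\<in>ball x0 r.
        ((\<lambda>al. norm (monomial_at x0 al y *\<^sub>R a al)) summable_on UNIV) \<and>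
        ((\<lambda>al. monomial_at x0 al y *\<^sub>R a al) has_sum f y) UNIV)"

definition real_analytic :: "(real^'n \<Rightarrow> real^'m) \<Rightarrow> bool" where
  "real_analytic f \<longleftrightarrow> (\<forall>x. real_analytic_at f x)"

definition analytic_diffeo :: "(real^'n \<Rightarrow> real^'n) \<Rightarrow> bool" where
  "analytic_diffeo f \<longleftrightarrow> bij f \<and> real_analytic f \<and> real_analytic (inv f)"

end

theory Submission imports Defs begin
lemma forward:
  fixes f :: "real^'n \<Rightarrow> real^'n" and P Q :: "'i \<Rightarrow> real^'n^'n"
  assumes bij: "bij f" and dL: "(f has_derivative L) (at 0)"
    and dM: "(inv f has_derivative M) (at (f 0))"
    and eq: "\<forall>x. \<forall>r\<in>I. f (P r *v x) = Q r *v f x"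
  shows "\<exists>C :: real^'n^'n. invertible C \<and> (\<forall>r\<in>I. C ** P r = Q r ** C)"
proof (intro exI conjI ballI)
  have linL: "linear L" using dL by (rule has_derivative_linear)
  have linM: "linear M" using dM by (rule has_derivative_linear)
  have "((inv f \<circ> f) has_derivative (M \<circ> L)) (at 0)"
    using diff_chain_at[OF dL dM] .
  moreover have "inv f \<circ> f = id" using bij by (simp add: bij_is_inj)
  ultimately have "(id has_derivative (M \<circ> L)) (at 0)" by simp
  then have "M \<circ> L = id"
    using has_derivative_unique has_derivative_id unfolding id_def by metis
  then have "matrix M ** matrix L = mat 1"
    by (metis linL linM matrix_compose matrix_id_mat_1)
  then show "invertible (matrix L)"
    using invertible_left_inverse by blast
  fix r assume r: "r \<in> I"
  have d1: "((f \<circ> (\<lambda>x. P r *v x)) has_derivative (L \<circ> (\<lambda>x. P r *v x))) (at 0)"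
    by (rule diff_chain_at) (auto intro!: linear_imp_has_derivative simp: dL)
  have d2: "(((\<lambda>x. Q r *v x) \<circ> f) has_derivative ((\<lambda>x. Q r *v x) \<circ> L)) (at 0)"
    by (rule diff_chain_at) (auto intro!: linear_imp_has_derivative simp: dL)
  have "f \<circ> (\<lambda>x. P r *v x) = (\<lambda>x. Q r *v x) \<circ> f" using eq r by auto
  with d1 d2 have "L \<circ> (\<lambda>x. P r *v x) = (\<lambda>x. Q r *v x) \<circ> L"
    using has_derivative_unique by metis
  then have "matrix (L \<circ> (\<lambda>x. P r *v x)) = matrix ((\<lambda>x. Q r *v x) \<circ> L)" by simp
  then show "matrix L ** P r = Q r ** matrix L"
    by (simp add: matrix_compose linL)
qed
lemma linear_C1: "C1_map (\<lambda>x::real^'n. (A::real^'n^'m) *v x)"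
  unfolding C1_map_def
  by (rule exI[of _ "\<lambda>_. Blinfun (\<lambda>x. A *v x)"])
     (auto simp: bounded_linear_Blinfun_apply intro!: linear_imp_has_derivative)

definition ee :: "'n \<Rightarrow> 'n \<Rightarrow> nat" where "ee i = (\<lambda>j. if j = i then 1 else 0)"

lemma ee_inj: "inj ee"
  unfolding inj_def ee_def by (metis one_neq_zero)

lemma ee_ne0: "ee i \<noteq> (\<lambda>_. 0)"
  unfolding ee_def by (metis one_neq_zero)

lemma monomial_ee: "monomial_at x0 (ee i) y = y$i - x0$i"
proof -
  have "monomial_at x0 (ee i) y = (\<Prod>j\<in>UNIV. if j = i then y$j - x0$j else 1)"
    unfolding monomial_at_def ee_def by (intro prod.cong) auto
  also have "\<dots> = y$i - x0$i" by (subst prod.delta) auto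
  finally show ?thesis .
qed

lemma monomial_0: "monomial_at x0 (\<lambda>_. 0) y = 1"
  unfolding monomial_at_def by simp

lemma linear_analytic: "real_analytic (\<lambda>x::real^'n. (A::real^'n^'m) *v x)"
  unfolding real_analytic_def real_analytic_at_def
proof (intro allI exI[of _ 1] conjI)
  fix x0 :: "real^'n"
  define z :: "'n \<Rightarrow> nat" where "z = (\<lambda>_. 0)"
  define a where "a al = (if al = z then A *v x0 else 0) + (\<Sum>i\<in>UNIV. if al = ee i then A *v axis i 1 else 0)" for al
  define B where "B = insert z (range ee)"
  have zB: "z \<notin> range ee" unfolding z_def by (metis ee_ne0 rangeE)
  have aout: "a al = 0" if "al \<notin> B" for al using that unfolding a_def B_def by (auto intro!: sum.neutral)
  have az: "a z = A *v x0" unfolding a_def using zB by (auto intro!: sum.neutral)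
  have ae: "a (ee i) = A *v axis i 1" for i
    using zB by (auto simp: a_def inj_eq[OF ee_inj])
  have finB: "finite B" unfolding B_def by simp
  show "(0::real) < 1" by simp
  show "\<exists>a. \<forall>y\<in>ball x0 1. (\<lambda>al. norm (monomial_at x0 al y *\<^sub>R a al)) summable_on UNIV \<and>
     ((\<lambda>al. monomial_at x0 al y *\<^sub>R a al) has_sum A *v y) UNIV"
  proof (rule exI[of _ a], intro ballI conjI)
    fix y :: "real^'n"
    have "((\<lambda>al. norm (monomial_at x0 al y *\<^sub>R a al)) has_sum
        (\<Sum>al\<in>B. norm (monomial_at x0 al y *\<^sub>R a al))) UNIV"
      by (rule has_sum_finite_neutralI[OF finB]) (auto simp: aout)
    then show "(\<lambda>al. norm (monomial_at x0 al y *\<^sub>R a al)) summable_on UNIV"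
      using summable_on_def by blast
    have "(\<Sum>al\<in>B. monomial_at x0 al y *\<^sub>R a al)
        = monomial_at x0 z y *\<^sub>R a z + (\<Sum>al\<in>range ee. monomial_at x0 al y *\<^sub>R a al)"
      unfolding B_def using zB by (simp add: sum.insert)
    also have "\<dots> = A *v x0 + (\<Sum>i\<in>UNIV. (y$i - x0$i) *\<^sub>R (A *v axis i 1))"
      using az by (simp add: sum.reindex[OF ee_inj] ae monomial_ee monomial_0[of x0 y, folded z_def])
    also have "(\<Sum>i\<in>UNIV. (y$i - x0$i) *\<^sub>R (A *v axis i 1)) = A *v (\<Sum>i\<in>UNIV. (y-x0)$i *s axis i 1)"
      by (simp add: vec.sum vec.scale scalar_mult_eq_scaleR linear.scaleR[OF matrix_vector_mul_linear])
    also have "\<dots> = A *v (y - x0)" using basis_expansion[of "y - x0"] by simp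
    finally have "(\<Sum>al\<in>B. monomial_at x0 al y *\<^sub>R a al) = A *v y"
      by (simp add: vec.diff)
    then show "((\<lambda>al. monomial_at x0 al y *\<^sub>R a al) has_sum A *v y) UNIV"
      by (intro has_sum_finite_neutralI[OF finB]) (auto simp: aout)
  qed
qed
definition deg :: "('n::finite \<Rightarrow> nat) \<Rightarrow> nat" where "deg al = sum al UNIV"

lemma deg_lt2: "deg al < 2 \<Longrightarrow> al = (\<lambda>_. 0) \<or> al \<in> range ee"
proof -
  assume "deg al < 2"
  then consider "deg al = 0" | "deg al = Suc 0" by linarith
  then show ?thesis
  proof cases
    case 1 then show ?thesis unfolding deg_def by (auto simp: fun_eq_iff)
  next
    case 2
    then obtain i where "al i = Suc 0" "\<forall>j. i \<noteq> j \<longrightarrow> al j = 0"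
      unfolding deg_def by (auto simp: sum_eq_Suc0_iff)
    then have "al = ee i" unfolding ee_def by (auto simp: fun_eq_iff)
    then show ?thesis by auto
  qed
qed

lemma deg_ee: "deg (ee i) = 1"
  unfolding deg_def ee_def by simp

lemma monomial_deg: "monomial_at x0 al (x0 + (\<chi> i. s)) = s ^ deg al"
  unfolding monomial_at_def deg_def by (simp add: power_sum)

lemma monomial_bound:
  assumes "norm (y - x0) \<le> t"
  shows "\<bar>monomial_at x0 al y\<bar> \<le> t ^ deg al"
proof -
  have "\<bar>monomial_at x0 al y\<bar> = (\<Prod>i\<in>UNIV. \<bar>y$i - x0$i\<bar> ^ al i)"
    unfolding monomial_at_def by (simp add: abs_prod power_abs)
  also have "\<dots> \<le> (\<Prod>i\<in>UNIV. t ^ al i)"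
  proof (intro prod_mono conjI)
    fix i
    have "\<bar>y$i - x0$i\<bar> \<le> t" using component_le_norm_cart[of "y - x0" i] assms by simp
    then show "\<bar>y$i - x0$i\<bar> ^ al i \<le> t ^ al i" by (intro power_mono) auto
  qed auto
  also have "\<dots> = t ^ deg al" unfolding deg_def by (simp add: power_sum)
  finally show ?thesis .
qed

lemma analytic_has_derivative:
  fixes f :: "real^'n \<Rightarrow> real^'m"
  assumes "real_analytic_at f x0"
  shows "\<exists>L. (f has_derivative L) (at x0)"
proof -
  obtain r a where r: "r > 0" and H: "\<And>y. y \<in> ball x0 r \<Longrightarrow>
        ((\<lambda>al. norm (monomial_at x0 al y *\<^sub>R a al)) summable_on UNIV) \<and>
        ((\<lambda>al. monomial_at x0 al y *\<^sub>R a al) has_sum f y) UNIV"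
    using assms unfolding real_analytic_at_def by blast
  define z :: "'n \<Rightarrow> nat" where "z = (\<lambda>_. 0)"
  have zB: "z \<notin> range ee" unfolding z_def by (metis ee_ne0 rangeE)
  define B where "B = insert z (range ee)"
  have finB: "finite B" unfolding B_def by simp
  have degB: "al \<in> B" if "deg al < 2" for al using deg_lt2[OF that] unfolding B_def z_def by auto
  have degz: "deg z = 0" unfolding deg_def z_def by simp
  define n where "n = real CARD('n)"
  have n1: "n \<ge> 1" unfolding n_def by simp
  define s where "s = r / (2 * n)"
  have s0: "s > 0" unfolding s_def using r n1 by simp
  have sr: "s < r" unfolding s_def using r n1 by (simp add: field_simps)
  define y1 :: "real^'n" where "y1 = x0 + (\<chi> i. s)"
  have "norm (y1 - x0) \<le> (\<Sum>i\<in>UNIV. \<bar>(y1 - x0)$i\<bar>)" by (rule norm_le_l1_cart)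
  also have "\<dots> = n * s" unfolding y1_def n_def using s0 by simp
  also have "\<dots> < r" unfolding s_def using r n1 by (simp add: field_simps)
  finally have y1r: "y1 \<in> ball x0 r" by (simp add: dist_norm norm_minus_commute)
  define M where "M = infsum (\<lambda>al. norm (monomial_at x0 al y1 *\<^sub>R a al)) UNIV"
  have HM: "((\<lambda>al. norm (monomial_at x0 al y1 *\<^sub>R a al)) has_sum M) UNIV"
    unfolding M_def using H[OF y1r] by simp
  define L where "L h = (\<Sum>i\<in>UNIV. h$i *\<^sub>R a (ee i))" for h :: "real^'n"
  have bl: "bounded_linear L" unfolding L_def
    by (intro bounded_linear_sum bounded_linear_compose[OF bounded_linear_scaleR_left] bounded_linear_vec_nth)
  define K where "K = M / s^2"
  have bound: "norm (f y - a z - L (y - x0)) \<le> K * norm (y - x0) ^ 2"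
    if ys: "norm (y - x0) \<le> s" for y
  proof -
    define t where "t = norm (y - x0)"
    have yr: "y \<in> ball x0 r" using ys sr by (simp add: dist_norm norm_minus_commute)
    define g where "g al = (if 2 \<le> deg al then monomial_at x0 al y *\<^sub>R a al else 0)" for al
    define h where "h al = (if 2 \<le> deg al then 0 else monomial_at x0 al y *\<^sub>R a al)" for al
    have hsum: "(h has_sum (a z + L (y - x0))) UNIV"
    proof (rule has_sum_finite_neutralI[OF finB])
      show "h al = 0" if "al \<in> UNIV - B" for al using that degB unfolding h_def by force
      have "(\<Sum>al\<in>B. h al) = h z + (\<Sum>i\<in>UNIV. h (ee i))"
        unfolding B_def using zB by (simp add: sum.insert sum.reindex[OF ee_inj])
      also have "\<dots> = a z + L (y - x0)"
        unfolding h_def L_def using monomial_0[of x0 y, folded z_def] by (simp add: degz deg_ee monomial_ee)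
      finally show "a z + L (y - x0) = (\<Sum>al\<in>B. h al)" by simp
    qed auto
    have "((\<lambda>al. monomial_at x0 al y *\<^sub>R a al + - h al) has_sum (f y + - (a z + L (y - x0)))) UNIV"
    proof (rule has_sum_add)
      show "((\<lambda>al. - h al) has_sum - (a z + L (y - x0))) UNIV"
        using hsum by (simp add: has_sum_uminus add.commute)
    qed (use H[OF yr] in auto)
    moreover have "(\<lambda>al. monomial_at x0 al y *\<^sub>R a al + - h al) = g"
      unfolding g_def h_def by auto
    ultimately have gsum: "(g has_sum (f y - a z - L (y - x0))) UNIV" by (simp add: algebra_simps)
    have HM2: "((\<lambda>al. (t/s)^2 * norm (monomial_at x0 al y1 *\<^sub>R a al)) has_sum ((t/s)^2 * M)) UNIV"
      by (rule has_sum_cmult_right[OF HM])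
    have "norm (f y - a z - L (y - x0)) \<le> (t/s)^2 * M"
    proof (rule norm_infsum_le[OF gsum HM2])
      fix al :: "'n \<Rightarrow> nat"
      have ts: "0 \<le> t/s" "t/s \<le> 1" using ys s0 unfolding t_def by auto
      show "norm (g al) \<le> (t/s)^2 * norm (monomial_at x0 al y1 *\<^sub>R a al)"
      proof (cases "2 \<le> deg al")
        case True
        have "norm (g al) = \<bar>monomial_at x0 al y\<bar> * norm (a al)" unfolding g_def using True by simp
        also have "\<dots> \<le> t ^ deg al * norm (a al)"
          by (intro mult_right_mono monomial_bound) (auto simp: t_def)
        also have "t ^ deg al = (t/s) ^ deg al * s ^ deg al" using s0 by (simp add: power_divide)
        also have "(t/s) ^ deg al \<le> (t/s)^2" by (rule power_decreasing[OF True ts])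
        finally have "norm (g al) \<le> (t/s)^2 * s ^ deg al * norm (a al)"
          by (simp add: mult_right_mono s0 order_trans)
        moreover have "norm (monomial_at x0 al y1 *\<^sub>R a al) = s ^ deg al * norm (a al)"
          unfolding y1_def monomial_deg using s0 by simp
        ultimately show ?thesis by (simp only: mult.assoc)
      next
        case False then show ?thesis unfolding g_def by simp
      qed
    qed
    also have "\<dots> = K * t^2" unfolding K_def using s0 by (simp add: power_divide field_simps)
    finally show ?thesis unfolding t_def .
  qed
  have fx0: "f x0 = a z"
    using bound[of x0] s0 linear_0[OF bounded_linear.linear[OF bl]] by simp
  have ev: "\<forall>\<^sub>F y in at x0. norm (norm (f y - f x0 - L (y - x0)) / norm (y - x0)) \<le> K * norm (y - x0)"
    unfolding eventually_at
  proof (rule exI[of _ s], intro conjI s0 ballI impI)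
    fix y :: "real^'n" assume y: "y \<noteq> x0 \<and> dist y x0 < s"
    then have np: "norm (y - x0) > 0" by simp
    have "norm (y - x0) \<le> s" using y by (simp add: dist_norm)
    from bound[OF this] have "norm (f y - f x0 - L (y - x0)) \<le> K * norm (y - x0) * norm (y - x0)"
      unfolding fx0 power2_eq_square by (simp only: mult.assoc)
    then have "norm (f y - f x0 - L (y - x0)) / norm (y - x0) \<le> K * norm (y - x0)"
      by (simp only: pos_divide_le_eq[OF np])
    then show "norm (norm (f y - f x0 - L (y - x0)) / norm (y - x0)) \<le> K * norm (y - x0)"
      by simp
  qed
  have lim: "((\<lambda>y. K * norm (y - x0)) \<longlongrightarrow> 0) (at x0)"
    using tendsto_norm_zero[OF LIM_zero[OF tendsto_ident_at]] by (rule tendsto_mult_right_zero)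
  have "(f has_derivative L) (at x0)"
    unfolding has_derivative_iff_norm using bl Lim_null_comparison[OF ev lim] by blast
  then show ?thesis by blast
qed
lemma linear_inv:
  fixes C :: "real^'n^'n" assumes "invertible C"
  shows "bij (\<lambda>x. C *v x) \<and> (\<exists>B. inv (\<lambda>x. C *v x) = (\<lambda>x. B *v x))"
proof -
  obtain B where B: "C ** B = mat 1" "B ** C = mat 1" using assms unfolding invertible_def by blast
  have 1: "(\<lambda>x. B *v x) \<circ> (\<lambda>x. C *v x) = id" using B by (auto simp: fun_eq_iff matrix_vector_mul_assoc)
  have 2: "(\<lambda>x. C *v x) \<circ> (\<lambda>x. B *v x) = id" using B by (auto simp: fun_eq_iff matrix_vector_mul_assoc)
  show ?thesis using o_bij[OF 1 2] inv_unique_comp[OF 2 1] by blast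
qed

theorem theorem9p3:
  fixes I :: "'i set" and P Q :: "'i \<Rightarrow> real^'n^'n"
  assumes "\<forall>r\<in>I. invertible (P r) \<and> invertible (Q r)"
  shows "((\<exists>f :: real^'n \<Rightarrow> real^'n. C1_diffeo f \<and> (\<forall>x. \<forall>r\<in>I. f (P r *v x) = Q r *v f x))
            \<longleftrightarrow> (\<exists>C :: real^'n^'n. invertible C \<and> (\<forall>r\<in>I. C ** P r = Q r ** C)))
       \<and> ((\<exists>f :: real^'n \<Rightarrow> real^'n. analytic_diffeo f \<and> (\<forall>x. \<forall>r\<in>I. f (P r *v x) = Q r *v f x))
            \<longleftrightarrow> (\<exists>C :: real^'n^'n. invertible C \<and> (\<forall>r\<in>I. C ** P r = Q r ** C)))"
proof -
  have eqv: "\<forall>x. \<forall>r\<in>I. C *v (P r *v x) = Q r *v (C *v x)"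
    if "\<forall>r\<in>I. C ** P r = Q r ** C" for C
    using that by (simp add: matrix_vector_mul_assoc)
  have A: "(\<exists>f :: real^'n \<Rightarrow> real^'n. C1_diffeo f \<and> (\<forall>x. \<forall>r\<in>I. f (P r *v x) = Q r *v f x))
            \<longleftrightarrow> (\<exists>C :: real^'n^'n. invertible C \<and> (\<forall>r\<in>I. C ** P r = Q r ** C))"
  proof
    assume "\<exists>f :: real^'n \<Rightarrow> real^'n. C1_diffeo f \<and> (\<forall>x. \<forall>r\<in>I. f (P r *v x) = Q r *v f x)"
    then obtain f :: "real^'n \<Rightarrow> real^'n" where f: "bij f" "C1_map f" "C1_map (inv f)"
      and e: "\<forall>x. \<forall>r\<in>I. f (P r *v x) = Q r *v f x" unfolding C1_diffeo_def by blast
    obtain f' where "\<forall>x. (f has_derivative blinfun_apply (f' x)) (at x)"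
      using f(2) unfolding C1_map_def by blast
    moreover obtain g' where "\<forall>x. (inv f has_derivative blinfun_apply (g' x)) (at x)"
      using f(3) unfolding C1_map_def by blast
    ultimately show "\<exists>C :: real^'n^'n. invertible C \<and> (\<forall>r\<in>I. C ** P r = Q r ** C)"
      using forward[OF f(1) _ _ e] by blast
  next
    assume "\<exists>C :: real^'n^'n. invertible C \<and> (\<forall>r\<in>I. C ** P r = Q r ** C)"
    then obtain C :: "real^'n^'n" where C: "invertible C" "\<forall>r\<in>I. C ** P r = Q r ** C" by blast
    from linear_inv[OF C(1)] obtain B where "bij (\<lambda>x. C *v x)" "inv (\<lambda>x. C *v x) = (\<lambda>x. B *v x)"
      by blast
    then have "C1_diffeo (\<lambda>x. C *v x)" unfolding C1_diffeo_def using linear_C1 by metis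
    then show "\<exists>f :: real^'n \<Rightarrow> real^'n. C1_diffeo f \<and> (\<forall>x. \<forall>r\<in>I. f (P r *v x) = Q r *v f x)"
      using eqv[OF C(2)] by blast
  qed
  have B: "(\<exists>f :: real^'n \<Rightarrow> real^'n. analytic_diffeo f \<and> (\<forall>x. \<forall>r\<in>I. f (P r *v x) = Q r *v f x))
            \<longleftrightarrow> (\<exists>C :: real^'n^'n. invertible C \<and> (\<forall>r\<in>I. C ** P r = Q r ** C))"
  proof
    assume "\<exists>f :: real^'n \<Rightarrow> real^'n. analytic_diffeo f \<and> (\<forall>x. \<forall>r\<in>I. f (P r *v x) = Q r *v f x)"
    then obtain f :: "real^'n \<Rightarrow> real^'n" where f: "bij f" "real_analytic f" "real_analytic (inv f)"
      and e: "\<forall>x. \<forall>r\<in>I. f (P r *v x) = Q r *v f x" unfolding analytic_diffeo_def by blast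
    obtain L where "(f has_derivative L) (at 0)"
      using f(2) analytic_has_derivative unfolding real_analytic_def by blast
    moreover obtain M where "(inv f has_derivative M) (at (f 0))"
      using f(3) analytic_has_derivative unfolding real_analytic_def by blast
    ultimately show "\<exists>C :: real^'n^'n. invertible C \<and> (\<forall>r\<in>I. C ** P r = Q r ** C)"
      using forward[OF f(1) _ _ e] by blast
  next
    assume "\<exists>C :: real^'n^'n. invertible C \<and> (\<forall>r\<in>I. C ** P r = Q r ** C)"
    then obtain C :: "real^'n^'n" where C: "invertible C" "\<forall>r\<in>I. C ** P r = Q r ** C" by blast
    from linear_inv[OF C(1)] obtain B where "bij (\<lambda>x. C *v x)" "inv (\<lambda>x. C *v x) = (\<lambda>x. B *v x)"
      by blast
    then have "analytic_diffeo (\<lambda>x. C *v x)" unfolding analytic_diffeo_def using linear_analytic by metis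
    then show "\<exists>f :: real^'n \<Rightarrow> real^'n. analytic_diffeo f \<and> (\<forall>x. \<forall>r\<in>I. f (P r *v x) = Q r *v f x)"
      using eqv[OF C(2)] by blast
  qed
  show ?thesis using A B by blast
qed

end
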